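(* For all integers $n\geq 1$ and $0\leq m\leq n$, \[ K_q(n,m)=\sum_{w\in\mathcal{K}(m,n-m+1)} q^{\mathrm{inv}(w)}=\sum_{w\in\overline{\mathcal{K}}(m,n-m+1)} q^{\mathrm{maj}(w)}. \]
   Context: For integers $n\ge m\ge 0$ the Gaussian polynomial is ${n\brack m}=\prod_{i=0}^{m-1}\frac{1-q^{n-i}}{1-q^{m-i}}$. For $n\geq 1$ and $0\le m\le n$, the $q$-Kaplansky number is $K_q(n,m)=\frac{1-q^{n+m}}{1-q^{n}}{n\brack m}$ (a polynomial in $q$). For a $(0,1)$-sequence $w=w_1w_2\cdots w_N$, $\mathrm{inv}(w)$ is the number of pairs $i<j$ with $w_i>w_j$, and $\mathrm{maj}(w)$ is the sum of all indices $i<N$ with $w_i>w_{i+1}$. $\mathcal{K}(m,n-m+1)$ is the set of $(0,1)$-sequences $w=w_1\cdots w_{n+1}$ of length $n+1$ with exactly $m$ ones and $n-m+1$ zeros such that if $w_{n+1}=1$ then $w_1=0$. $\overline{\mathcal{K}}(m,n-m+1)$ is the set of $(0,1)$-sequences $w=w_1\cdots w_{n+1}$ with exactly $m$ ones and $n-m+1$ zeros such that if $w_{n+1}=1$, then, letting $t=\max\{i: w_i=0\}$, either $t=1$ or ($t\ge 2$ and $w_{t-1}=0$). *)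

theory Defs
  imports "HOL-Computational_Algebra.Polynomial"
begin

text \<open>Polynomials in q are rational polynomials; q^k is monom 1 k.
  Fractions that are polynomials are rendered by exact polynomial division.\<close>

definition gauss_poly :: "nat \<Rightarrow> nat \<Rightarrow> rat poly" where
  "gauss_poly n m =
     (\<Prod>i<m. 1 - monom 1 (n - i)) div (\<Prod>i<m. 1 - monom 1 (m - i))"

definition kaplansky_poly :: "nat \<Rightarrow> nat \<Rightarrow> rat poly" where
  "kaplansky_poly n m = ((1 - monom 1 (n + m)) * gauss_poly n m) div (1 - monom 1 n)"

text \<open>(0,1)-sequences are lists over {0,1}; entry w_i (1-based) is w ! (i-1).\<close>

definition inv01 :: "nat list \<Rightarrow> nat" where
  "inv01 w = card {(i, j). i < j \<and> j < length w \<and> w ! i > w ! j}"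

definition maj01 :: "nat list \<Rightarrow> nat" where
  "maj01 w = (\<Sum>i\<in>{i. i + 1 < length w \<and> w ! i > w ! (i + 1)}. i + 1)"

definition seqs01 :: "nat \<Rightarrow> nat \<Rightarrow> nat list set" where
  "seqs01 a b = {w. length w = a + b \<and> set w \<subseteq> {0, 1} \<and>
                    length (filter (\<lambda>x. x = 1) w) = a \<and>
                    length (filter (\<lambda>x. x = 0) w) = b}"

definition Kset :: "nat \<Rightarrow> nat \<Rightarrow> nat list set" where
  "Kset a b = {w \<in> seqs01 a b. last w = 1 \<longrightarrow> w ! 0 = 0}"

text \<open>Kbar(a,b): if the last entry is 1, with t the (1-based) position of the last 0,
  either t = 1 or (t \<ge> 2 and w_{t-1} = 0). Here t0 = t - 1 is the 0-based position.\<close>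
definition Kbar :: "nat \<Rightarrow> nat \<Rightarrow> nat list set" where
  "Kbar a b = {w \<in> seqs01 a b. last w = 1 \<longrightarrow>
      (let t0 = Max {i. i < length w \<and> w ! i = 0}
       in t0 = 0 \<or> (t0 \<ge> 1 \<and> w ! (t0 - 1) = 0))}"

end

theory Submission imports Defs begin

abbreviation Q :: "nat \<Rightarrow> rat poly" where "Q k \<equiv> monom 1 k"

lemma QQ: "Q a * Q b = Q (a+b)" by (simp add: mult_monom)

fun qb :: "nat \<Rightarrow> nat \<Rightarrow> rat poly" where
  "qb 0 b = 1"
| "qb (Suc a) 0 = 1"
| "qb (Suc a) (Suc b) = qb a (Suc b) + Q (Suc a) * qb (Suc a) b"

fun fp :: "nat \<Rightarrow> rat poly" where
  "fp 0 = 1"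
| "fp (Suc k) = fp k * (1 - Q (Suc k))"

lemma one_minus_Q_nz: "k > 0 \<Longrightarrow> 1 - Q k \<noteq> 0"
proof
  assume "k > 0" "1 - Q k = 0"
  then have "coeff (1 - Q k) 0 = 0" by simp
  with \<open>k>0\<close> show False by simp
qed

lemma fp_nz: "fp k \<noteq> 0"
proof (induction k)
  case (Suc k) then show ?case using one_minus_Q_nz[of "Suc k"] by simp
qed simp

lemma qb_0: "qb a 0 = 1" by (cases a) auto

lemma ringA: fixes q r A A' B B' F x y :: "'a::comm_ring_1"
  assumes "q*A*B' = F" "r*A'*B = F" "A' = A*(1-x)" "B' = B*(1-y)"
  shows "(q + x*r)*A'*B' = F*(1-x*y)"
proof -
  have "(q + x*r)*A'*B' = (q*A*B')*(1-x) + x*(r*A'*B)*(1-y)"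
    by (simp add: assms(3,4) algebra_simps)
  also have "\<dots> = F*(1-x) + x*F*(1-y)" by (simp only: assms(1,2))
  also have "\<dots> = F*(1-x*y)" by (simp add: algebra_simps)
  finally show ?thesis .
qed

lemma qb_prod: "qb a b * fp a * fp b = fp (a+b)"
proof (induction a b rule: qb.induct)
  case (1 b) then show ?case by simp
next
  case (2 a) then show ?case by simp
next
  case (3 a b)
  have e: "fp (Suc a + Suc b) = fp (Suc (a+b)) * (1 - Q (Suc a) * Q (Suc b))"
    by (simp add: QQ)
  have i1: "qb a (Suc b) * fp a * fp (Suc b) = fp (Suc (a+b))" using 3(1) by simp
  have i2: "qb (Suc a) b * fp (Suc a) * fp b = fp (Suc (a+b))" using 3(2) by simp
  show ?case unfolding qb.simps e
    by (rule ringA[OF i1 i2]) simp_all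
qed

lemma qb_rec: "qb a b = (if a=0 \<and> b=0 then 1 else 0) + (if 0<a then qb (a-1) b else 0)
   + (if 0<b then Q a * qb a (b-1) else 0)"
  by (cases a; cases b) (auto simp: qb_0)

lemma qb_sym_step: "(1 - Q (Suc b)) * qb a (Suc b) = (1 - Q (Suc a)) * qb (Suc a) b"
proof -
  have "(1 - Q (Suc b)) * qb a (Suc b) * (fp a * fp b) = qb a (Suc b) * fp a * fp (Suc b)"
    by (simp add: algebra_simps)
  also have "\<dots> = fp (a + Suc b)" by (rule qb_prod)
  also have "\<dots> = qb (Suc a) b * fp (Suc a) * fp b" using qb_prod[of "Suc a" b] by simp
  also have "\<dots> = (1 - Q (Suc a)) * qb (Suc a) b * (fp a * fp b)" by (simp add: algebra_simps)
  finally show ?thesis using fp_nz by (simp add: mult_right_cancel)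
qed

lemma qb_rec2: "qb a b = (if a=0 \<and> b=0 then 1 else 0) + (if 0<a then Q b * qb (a-1) b else 0)
   + (if 0<b then qb a (b-1) else 0)"
proof (cases a)
  case 0 then show ?thesis by simp
next
  case (Suc a')
  show ?thesis
  proof (cases b)
    case 0 then show ?thesis using Suc by (simp add: qb_0)
  next
    case (Suc b')
    have "qb (Suc a') (Suc b') = Q (Suc b') * qb a' (Suc b') + qb (Suc a') b'"
      using qb_sym_step[of b' a'] by (simp add: algebra_simps)
    then show ?thesis using \<open>a = Suc a'\<close> Suc by simp
  qed
qed

lemma prod_fp: "m \<le> n \<Longrightarrow> (\<Prod>i<m. 1 - Q (n - i)) * fp (n - m) = fp n"
proof (induction m)
  case 0 then show ?case by simp
next
  case (Suc m)
  have "n - m = Suc (n - Suc m)" using Suc.prems by simp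
  then have e: "fp (n - m) = fp (n - Suc m) * (1 - Q (n - m))" by simp
  have "(\<Prod>i<Suc m. 1 - Q (n - i)) * fp (n - Suc m) = (\<Prod>i<m. 1 - Q (n - i)) * ((1 - Q (n - m)) * fp (n - Suc m))"
    by (simp only: prod.lessThan_Suc mult.assoc)
  also have "\<dots> = (\<Prod>i<m. 1 - Q (n - i)) * fp (n - m)" by (simp only: e mult.commute)
  finally show ?case using Suc by simp
qed

lemma gauss_qb: "m \<le> n \<Longrightarrow> gauss_poly n m = qb m (n - m)"
proof -
  assume mn: "m \<le> n"
  have d: "(\<Prod>i<m. 1 - Q (m - i)) = fp m" using prod_fp[of m m] by simp
  have "(\<Prod>i<m. 1 - Q (n - i)) * fp (n - m) = qb m (n-m) * fp m * fp (n - m)"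
    using prod_fp[OF mn] qb_prod[of m "n-m"] mn by simp
  then have "(\<Prod>i<m. 1 - Q (n - i)) = qb m (n-m) * fp m" using fp_nz
    by (simp add: mult_right_cancel)
  then show ?thesis unfolding gauss_poly_def d using fp_nz by simp
qed

lemma ringB: fixes Y Z s t :: "'a::comm_ring_1"
  assumes "Y*(1-t) = Z*(1-s)"
  shows "(1 - s*t) * Y * (1-t) = (t*Y + Z)*(1-s)*(1-t)"
proof -
  have "(1 - s*t) * Y * (1-t) = (1-s*t)*(Y*(1-t))" by (simp add: algebra_simps)
  also have "\<dots> = (1-s*t)*(Z*(1-s))" by (simp only: assms)
  also have "\<dots> = t*(Z*(1-s))*(1-s) + Z*(1-s)*(1-t)" by (simp add: algebra_simps)
  also have "\<dots> = t*(Y*(1-t))*(1-s) + Z*(1-s)*(1-t)" by (simp only: assms)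
  also have "\<dots> = (t*Y + Z)*(1-s)*(1-t)" by (simp add: algebra_simps)
  finally show ?thesis .
qed

lemma kap_qb: assumes "1 \<le> n" "m \<le> n"
  shows "kaplansky_poly n m = Q m * qb m (n-m) + (if 0 < m then qb (m-1) (n-m) else 0)"
proof -
  let ?E = "Q m * qb m (n-m) + (if 0 < m then qb (m-1) (n-m) else 0)"
  have key: "(1 - Q (n+m)) * qb m (n-m) = ?E * (1 - Q n)"
  proof (cases m)
    case 0 then show ?thesis by simp
  next
    case (Suc k)
    let ?c = "n - m"
    have n: "n = Suc k + ?c" using Suc assms by simp
    have r: "qb m ?c * (1 - Q m) = qb k ?c * (1 - Q n)"
    proof -
      have "qb m ?c * (1 - Q m) * (fp k * fp ?c) = qb (Suc k) ?c * fp (Suc k) * fp ?c"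
        using Suc by (simp add: algebra_simps)
      also have "\<dots> = fp (Suc k + ?c)" by (rule qb_prod)
      also have "\<dots> = fp (k + ?c) * (1 - Q n)" using n by (metis add_Suc fp.simps(2))
      also have "\<dots> = qb k ?c * (1 - Q n) * (fp k * fp ?c)" using qb_prod[of k ?c]
        by (simp add: algebra_simps)
      finally show ?thesis using fp_nz by (simp add: mult_right_cancel)
    qed
    have "(1 - Q n * Q m) * qb m ?c * (1 - Q m) = (Q m * qb m ?c + qb k ?c)*(1 - Q n)*(1 - Q m)"
      by (rule ringB[OF r])
    then have "(1 - Q n * Q m) * qb m ?c = (Q m * qb m ?c + qb k ?c)*(1 - Q n)"
      using one_minus_Q_nz[of m] Suc by (simp add: mult_right_cancel)
    then show ?thesis using Suc by (simp add: QQ)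
  qed
  show ?thesis unfolding kaplansky_poly_def gauss_qb[OF assms(2)] key
    using one_minus_Q_nz[of n] assms by simp
qed


lemma seqs01_finite: "finite (seqs01 a b)"
proof -
  have "seqs01 a b \<subseteq> {xs. set xs \<subseteq> {0,1} \<and> length xs = a+b}"
    unfolding seqs01_def by auto
  moreover have "finite {xs. set xs \<subseteq> {0::nat,1} \<and> length xs = a+b}"
    by (rule finite_lists_length_eq) simp
  ultimately show ?thesis by (rule finite_subset)
qed

lemma Nil_seqs01: "[] \<in> seqs01 a b \<longleftrightarrow> a = 0 \<and> b = 0"
  unfolding seqs01_def by auto

lemma snoc_seqs01: "u @ [x] \<in> seqs01 a b \<longleftrightarrow>
   (x = 1 \<and> 0 < a \<and> u \<in> seqs01 (a-1) b) \<or> (x = 0 \<and> 0 < b \<and> u \<in> seqs01 a (b-1))"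
  unfolding seqs01_def by auto

lemma seqs01_split: "seqs01 a b = (if a = 0 \<and> b = 0 then {[]} else {})
   \<union> (\<lambda>u. u @ [1]) ` (if 0 < a then seqs01 (a-1) b else {})
   \<union> (\<lambda>u. u @ [0]) ` (if 0 < b then seqs01 a (b-1) else {})"
proof (rule set_eqI)
  fix w show "w \<in> seqs01 a b \<longleftrightarrow> w \<in> (if a = 0 \<and> b = 0 then {[]} else {})
   \<union> (\<lambda>u. u @ [1]) ` (if 0 < a then seqs01 (a-1) b else {})
   \<union> (\<lambda>u. u @ [0]) ` (if 0 < b then seqs01 a (b-1) else {})"
  proof (cases w rule: rev_exhaust)
    case Nil then show ?thesis by (auto simp: Nil_seqs01)
  next
    case (snoc u x)
    then show ?thesis by (auto simp: snoc_seqs01)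
  qed
qed

lemma sum_seqs01: "(\<Sum>w\<in>seqs01 a b. F w) = (if a = 0 \<and> b = 0 then F [] else 0)
   + (if 0 < a then (\<Sum>u\<in>seqs01 (a-1) b. F (u @ [1])) else 0)
   + (if 0 < b then (\<Sum>u\<in>seqs01 a (b-1). F (u @ [0])) else 0)"
proof -
  let ?A = "(if a = 0 \<and> b = 0 then {[]} else {}) :: nat list set"
  let ?B = "(\<lambda>u. u @ [1::nat]) ` (if 0 < a then seqs01 (a-1) b else {})"
  let ?C = "(\<lambda>u. u @ [0::nat]) ` (if 0 < b then seqs01 a (b-1) else {})"
  have f: "finite ?A" "finite ?B" "finite ?C" by (auto simp: seqs01_finite)
  have d1: "?A \<inter> ?B = {}" "(?A \<union> ?B) \<inter> ?C = {}" by auto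
  have i: "inj_on (\<lambda>u. u @ [x]) S" for x :: nat and S by (auto simp: inj_on_def)
  have "(\<Sum>w\<in>seqs01 a b. F w) = sum F ?A + sum F ?B + sum F ?C"
    apply (subst seqs01_split)
    using f d1 by (simp add: sum.union_disjoint)
  also have "sum F ?A = (if a = 0 \<and> b = 0 then F [] else 0)" by simp
  also have "sum F ?B = (if 0 < a then (\<Sum>u\<in>seqs01 (a-1) b. F (u @ [1])) else 0)"
    by (simp add: sum.reindex[OF i])
  also have "sum F ?C = (if 0 < b then (\<Sum>u\<in>seqs01 a (b-1). F (u @ [0])) else 0)"
    by (simp add: sum.reindex[OF i])
  finally show ?thesis .
qed

lemma seqs01_set: "w \<in> seqs01 a b \<Longrightarrow> set w \<subseteq> {0,1}"
  unfolding seqs01_def by auto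
lemma seqs01_len: "w \<in> seqs01 a b \<Longrightarrow> length w = a + b"
  unfolding seqs01_def by auto
lemma seqs01_ones: "w \<in> seqs01 a b \<Longrightarrow> length (filter (\<lambda>x. x = 1) w) = a"
  unfolding seqs01_def by auto
lemma seqs01_zero: "w \<in> seqs01 a b \<Longrightarrow> 0 < b \<Longrightarrow> 0 \<in> set w"
  unfolding seqs01_def by (auto simp: filter_empty_conv)
lemma seqs01_nozero: "w \<in> seqs01 a 0 \<Longrightarrow> 0 \<notin> set w"
  unfolding seqs01_def by (auto simp: filter_empty_conv)

lemma inv01_Nil[simp]: "inv01 [] = 0" by (simp add: inv01_def)
lemma maj01_Nil[simp]: "maj01 [] = 0" by (simp add: maj01_def)

lemma inv01_snoc: "inv01 (u @ [x]) = inv01 u + card {i. i < length u \<and> u ! i > x}"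
proof -
  let ?S = "{(i, j). i < j \<and> j < length u \<and> u ! i > u ! j}"
  let ?T = "(\<lambda>i. (i, length u)) ` {i. i < length u \<and> u ! i > x}"
  have "{(i, j). i < j \<and> j < length (u @ [x]) \<and> (u@[x]) ! i > (u@[x]) ! j} = ?S \<union> ?T"
    by (auto simp: nth_append less_Suc_eq)
  moreover have "finite ?S" by (rule finite_subset[of _ "{..<length u} \<times> {..<length u}"]) auto
  moreover have "finite ?T" by simp
  moreover have "?S \<inter> ?T = {}" by auto
  moreover have "card ?T = card {i. i < length u \<and> u ! i > x}"
    by (rule card_image) (auto simp: inj_on_def)
  ultimately show ?thesis unfolding inv01_def by (simp add: card_Un_disjoint)
qed

lemma inv01_snoc1: "set u \<subseteq> {0,1} \<Longrightarrow> inv01 (u @ [1]) = inv01 u"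
proof -
  assume s: "set u \<subseteq> {0,1}"
  have "{i. i < length u \<and> u ! i > 1} = {}"
    using s nth_mem by fastforce
  then show ?thesis by (simp add: inv01_snoc)
qed

lemma inv01_snoc0: "set u \<subseteq> {0,1} \<Longrightarrow> inv01 (u @ [0]) = inv01 u + length (filter (\<lambda>x. x = 1) u)"
proof -
  assume s: "set u \<subseteq> {0,1}"
  have "{i. i < length u \<and> u ! i > 0} = {i. i < length u \<and> u ! i = 1}"
    using s nth_mem by fastforce
  then show ?thesis by (simp add: inv01_snoc length_filter_conv_card)
qed

lemma maj01_snoc: "maj01 (u @ [x]) = maj01 u + (if u \<noteq> [] \<and> last u > x then length u else 0)"
proof -
  let ?S = "{i. i + 1 < length u \<and> u ! i > u ! (i + 1)}"
  have e: "{i. i + 1 < length (u@[x]) \<and> (u@[x]) ! i > (u@[x]) ! (i + 1)}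
     = ?S \<union> (if u \<noteq> [] \<and> last u > x then {length u - 1} else {})"
    by (cases u rule: rev_exhaust) (auto simp: nth_append less_Suc_eq)
  have f: "finite ?S" by (rule finite_subset[of _ "{..<length u}"]) auto
  show ?thesis
  proof (cases "u \<noteq> [] \<and> last u > x")
    case True
    then have "length u - 1 \<notin> ?S" by auto
    then show ?thesis unfolding maj01_def e using True f by simp
  next
    case False then show ?thesis unfolding maj01_def e if_not_P[OF False] by simp
  qed
qed

lemma inv_gf: "(\<Sum>w\<in>seqs01 a b. Q (inv01 w)) = qb a b"
proof (induction "a+b" arbitrary: a b)
  case 0 then have "seqs01 a b = {[]}" using seqs01_split[of a b] by simp
  then show ?case using 0 by (simp add: inv01_def)
next
  case (Suc N)
  have t1: "(\<Sum>u\<in>seqs01 (a-1) b. Q (inv01 (u @ [1]))) = qb (a-1) b" if "0 < a"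
  proof -
    have "(\<Sum>u\<in>seqs01 (a-1) b. Q (inv01 (u @ [1]))) = (\<Sum>u\<in>seqs01 (a-1) b. Q (inv01 u))"
      by (rule sum.cong[OF refl]) (metis inv01_snoc1 seqs01_set)
    then show ?thesis using Suc that by simp
  qed
  have t2: "(\<Sum>u\<in>seqs01 a (b-1). Q (inv01 (u @ [0]))) = Q a * qb a (b-1)" if "0 < b"
  proof -
    have "(\<Sum>u\<in>seqs01 a (b-1). Q (inv01 (u @ [0]))) = (\<Sum>u\<in>seqs01 a (b-1). Q a * Q (inv01 u))"
      proof (rule sum.cong[OF refl])
      fix u assume u: "u \<in> seqs01 a (b-1)"
      show "Q (inv01 (u @ [0])) = Q a * Q (inv01 u)"
        using inv01_snoc0[OF seqs01_set[OF u]] seqs01_ones[OF u] by (simp add: QQ add.commute)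
    qed
    then show ?thesis using Suc that by (simp add: sum_distrib_left[symmetric])
  qed
  have t1': "(if 0 < a then (\<Sum>u\<in>seqs01 (a-1) b. Q (inv01 (u @ [1]))) else 0) = (if 0 < a then qb (a-1) b else 0)"
    using t1 by simp
  have t2': "(if 0 < b then (\<Sum>u\<in>seqs01 a (b-1). Q (inv01 (u @ [0]))) else 0) = (if 0 < b then Q a * qb a (b-1) else 0)"
    using t2 by simp
  show ?case apply (subst sum_seqs01, subst qb_rec) unfolding t1' t2' by simp

qed

lemma maj01_single[simp]: "maj01 [x] = 0" using maj01_snoc[of "[]" x] by simp

lemma maj01_snoc1: "set u \<subseteq> {0,1} \<Longrightarrow> maj01 (u @ [1]) = maj01 u"
proof -
  assume s: "set u \<subseteq> {0,1}"
  have "u \<noteq> [] \<Longrightarrow> last u \<in> {0,1}" using s last_in_set[of u] by blast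
  then have "\<not> (u \<noteq> [] \<and> last u > 1)" by auto
  then show ?thesis by (simp add: maj01_snoc)
qed

lemma maj01_snoc00: "maj01 (u @ [0] @ [0]) = maj01 (u @ [0])"
  using maj01_snoc[of "u @ [0]" 0] by simp

lemma maj01_snoc10: "set u \<subseteq> {0,1} \<Longrightarrow> maj01 (u @ [1] @ [0]) = maj01 u + Suc (length u)"
  using maj01_snoc[of "u @ [1]" 0] maj01_snoc1[of u] by simp

lemma maj_gf: "(\<Sum>w\<in>seqs01 a b. Q (maj01 w)) = qb a b \<and>
   (\<Sum>w\<in>seqs01 a b. Q (maj01 (w @ [0]))) = Q a * qb a b"
proof (induction "a+b" arbitrary: a b)
  case 0 then have "seqs01 a b = {[]}" using seqs01_split[of a b] by simp
  then show ?case using 0 maj01_snoc[of "[]" 0] by simp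
next
  case (Suc N)
  have t1: "(if 0 < a then (\<Sum>u\<in>seqs01 (a-1) b. Q (maj01 (u @ [1]))) else 0) = (if 0 < a then qb (a-1) b else 0)"
  proof (cases "0 < a")
    case True
    have "(\<Sum>u\<in>seqs01 (a-1) b. Q (maj01 (u @ [1]))) = (\<Sum>u\<in>seqs01 (a-1) b. Q (maj01 u))"
      by (rule sum.cong[OF refl]) (metis maj01_snoc1 seqs01_set)
    then show ?thesis using Suc True by simp
  qed simp
  have t2: "(if 0 < b then (\<Sum>u\<in>seqs01 a (b-1). Q (maj01 (u @ [0]))) else 0) = (if 0 < b then Q a * qb a (b-1) else 0)"
  proof (cases "0 < b")
    case True then show ?thesis using Suc by simp
  qed simp
  have t3: "(if 0 < a then (\<Sum>u\<in>seqs01 (a-1) b. Q (maj01 ((u @ [1]) @ [0]))) else 0) = (if 0 < a then Q a * (Q b * qb (a-1) b) else 0)"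
  proof (cases "0 < a")
    case True
    have "(\<Sum>u\<in>seqs01 (a-1) b. Q (maj01 ((u @ [1]) @ [0]))) = (\<Sum>u\<in>seqs01 (a-1) b. Q (a+b) * Q (maj01 u))"
    proof (rule sum.cong[OF refl])
      fix u assume u: "u \<in> seqs01 (a-1) b"
      show "Q (maj01 ((u @ [1]) @ [0])) = Q (a+b) * Q (maj01 u)"
        using maj01_snoc10[OF seqs01_set[OF u]] seqs01_len[OF u] True by (simp add: QQ add.commute)
    qed
    also have "\<dots> = Q (a+b) * (\<Sum>u\<in>seqs01 (a-1) b. Q (maj01 u))" by (simp add: sum_distrib_left)
    also have "\<dots> = Q (a+b) * qb (a-1) b" using Suc True by simp
    also have "\<dots> = Q a * (Q b * qb (a-1) b)" by (simp add: QQ[symmetric] mult.assoc)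
    finally show ?thesis using True by simp
  qed simp
  have t4: "(if 0 < b then (\<Sum>u\<in>seqs01 a (b-1). Q (maj01 ((u @ [0]) @ [0]))) else 0) = (if 0 < b then Q a * qb a (b-1) else 0)"
  proof (cases "0 < b")
    case True then show ?thesis using Suc maj01_snoc00 by simp
  qed simp
  have A: "(\<Sum>w\<in>seqs01 a b. Q (maj01 w)) = qb a b"
    apply (subst sum_seqs01, subst qb_rec) unfolding t1 t2 by simp
  have B: "(\<Sum>w\<in>seqs01 a b. Q (maj01 (w @ [0]))) = Q a * qb a b"
    apply (subst sum_seqs01, subst qb_rec2) unfolding t3 t4 by (simp add: maj01_snoc ring_distribs)
  show ?case using A B by simp
qed


lemma inv01_single[simp]: "inv01 [x] = 0" using inv01_snoc[of "[]" x] by simp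

lemma seqs01_00: "seqs01 0 0 = {[]}" using seqs01_split[of 0 0] by simp

lemma seqs01_nonempty: "u \<in> seqs01 a b \<Longrightarrow> 0 < b \<Longrightarrow> u \<noteq> []"
  using seqs01_len by fastforce

lemma first_gf: "0 < b \<Longrightarrow> (\<Sum>u\<in>seqs01 a b. if u ! 0 = 0 then Q (inv01 u) else 0) = qb a (b-1)"
proof (induction "a+b" arbitrary: a b)
  case 0 then show ?case by simp
next
  case (Suc N)
  let ?F = "\<lambda>u::nat list. if u ! 0 = 0 then Q (inv01 u) else 0"
  have t1: "(if 0 < a then (\<Sum>u\<in>seqs01 (a-1) b. ?F (u @ [1])) else 0) = (if 0 < a then qb (a-1) (b-1) else 0)"
  proof (cases "0 < a")
    case True
    have "(\<Sum>u\<in>seqs01 (a-1) b. ?F (u @ [1])) = (\<Sum>u\<in>seqs01 (a-1) b. ?F u)"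
    proof (rule sum.cong[OF refl])
      fix u assume u: "u \<in> seqs01 (a-1) b"
      have "u \<noteq> []" using seqs01_nonempty[OF u Suc.prems] .
      then have "(u @ [1]) ! 0 = u ! 0" by (simp add: nth_append)
      then show "?F (u @ [1]) = ?F u" using inv01_snoc1[OF seqs01_set[OF u]] by simp
    qed
    then show ?thesis using Suc True by simp
  qed simp
  have t2: "(if 0 < b then (\<Sum>u\<in>seqs01 a (b-1). ?F (u @ [0])) else 0) =
     (if a = 0 \<and> b - 1 = 0 then 1 else 0) + (if 0 < b - 1 then Q a * qb a (b - 1 - 1) else 0)"
  proof (cases "b = 1")
    case True
    show ?thesis
    proof (cases "a = 0")
      case True then show ?thesis using \<open>b=1\<close> by (simp add: seqs01_00)
    next
      case False
      have "(\<Sum>u\<in>seqs01 a 0. ?F (u @ [0])) = (\<Sum>u\<in>seqs01 a 0. 0)"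
      proof (rule sum.cong[OF refl])
        fix u assume u: "u \<in> seqs01 a 0"
        have "u \<noteq> []" using seqs01_len[OF u] False by auto
        then have "(u @ [0]) ! 0 = u ! 0" "u ! 0 \<in> set u" by (auto simp: nth_append)
        then show "?F (u @ [0]) = 0" using seqs01_nozero[OF u] by (metis gr0I)
      qed
      then show ?thesis using True False by simp
    qed
  next
    case False
    show ?thesis
    proof (cases "0 < b")
      case True
      with False have b1: "0 < b - 1" by simp
      have "(\<Sum>u\<in>seqs01 a (b-1). ?F (u @ [0])) = (\<Sum>u\<in>seqs01 a (b-1). Q a * ?F u)"
      proof (rule sum.cong[OF refl])
        fix u assume u: "u \<in> seqs01 a (b-1)"
        have "u \<noteq> []" using seqs01_nonempty[OF u b1] .
        then have "(u @ [0]) ! 0 = u ! 0" by (simp add: nth_append)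
        then show "?F (u @ [0]) = Q a * ?F u"
          using inv01_snoc0[OF seqs01_set[OF u]] seqs01_ones[OF u] by (simp add: QQ add.commute)
      qed
      also have "\<dots> = Q a * qb a (b - 1 - 1)"
        using Suc.hyps(1)[of a "b-1"] Suc.hyps(2) b1 by (simp add: sum_distrib_left[symmetric])
      finally show ?thesis using b1 True by simp
    qed (use Suc.prems in simp)
  qed
  show ?case
    apply (subst sum_seqs01, subst qb_rec[of a "b-1"]) unfolding t1 t2 using Suc.prems by simp
qed

lemma Kset_inv: assumes "1 \<le> n" "m \<le> n"
  shows "(\<Sum>w\<in>Kset m (n - m + 1). Q (inv01 w)) = Q m * qb m (n-m) + (if 0 < m then qb (m-1) (n-m) else 0)"
proof -
  let ?b = "n - m + 1"
  let ?F = "\<lambda>w::nat list. if last w = 1 \<longrightarrow> w ! 0 = 0 then Q (inv01 w) else 0"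
  have "(\<Sum>w\<in>Kset m ?b. Q (inv01 w)) = (\<Sum>w\<in>seqs01 m ?b. ?F w)"
    unfolding Kset_def by (rule sum.inter_filter[OF seqs01_finite])
  also have "\<dots> = (if 0 < m then (\<Sum>u\<in>seqs01 (m-1) ?b. ?F (u @ [1])) else 0)
     + (\<Sum>u\<in>seqs01 m (n-m). ?F (u @ [0]))"
    by (subst sum_seqs01) simp
  also have "(\<Sum>u\<in>seqs01 m (n-m). ?F (u @ [0])) = Q m * qb m (n-m)"
  proof -
    have "(\<Sum>u\<in>seqs01 m (n-m). ?F (u @ [0])) = (\<Sum>u\<in>seqs01 m (n-m). Q m * Q (inv01 u))"
    proof (rule sum.cong[OF refl])
      fix u assume u: "u \<in> seqs01 m (n-m)"
      show "?F (u @ [0]) = Q m * Q (inv01 u)"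
        using inv01_snoc0[OF seqs01_set[OF u]] seqs01_ones[OF u] by (simp add: QQ add.commute)
    qed
    then show ?thesis by (simp add: sum_distrib_left[symmetric] inv_gf)
  qed
  also have "(if 0 < m then (\<Sum>u\<in>seqs01 (m-1) ?b. ?F (u @ [1])) else 0) = (if 0 < m then qb (m-1) (n-m) else 0)"
  proof (cases "0 < m")
    case True
    have "(\<Sum>u\<in>seqs01 (m-1) ?b. ?F (u @ [1])) = (\<Sum>u\<in>seqs01 (m-1) ?b. if u ! 0 = 0 then Q (inv01 u) else 0)"
    proof (rule sum.cong[OF refl])
      fix u assume u: "u \<in> seqs01 (m-1) ?b"
      have "u \<noteq> []" using seqs01_nonempty[OF u] by simp
      then have "(u @ [1]) ! 0 = u ! 0" by (simp add: nth_append)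
      then show "?F (u @ [1]) = (if u ! 0 = 0 then Q (inv01 u) else 0)"
        using inv01_snoc1[OF seqs01_set[OF u]] by simp
    qed
    also have "\<dots> = qb (m-1) (n-m)" by (subst first_gf) simp_all
    finally show ?thesis using True by simp
  qed simp
  finally show ?thesis by (simp add: add.commute)
qed


definition pz :: "nat list \<Rightarrow> bool" where
  "pz w = (let t0 = Max {i. i < length w \<and> w ! i = 0}
       in t0 = 0 \<or> (t0 \<ge> 1 \<and> w ! (t0 - 1) = 0))"

lemma Kbar_pz: "Kbar a b = {w \<in> seqs01 a b. last w = 1 \<longrightarrow> pz w}"
  unfolding Kbar_def pz_def ..

lemma pz_snoc1: assumes "0 \<in> set u" shows "pz (u @ [1]) = pz u"
proof -
  let ?S = "{i. i < length u \<and> u ! i = 0}"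
  have e: "{i. i < length (u @ [1]) \<and> (u @ [1]) ! i = 0} = ?S"
    by (auto simp: nth_append less_Suc_eq)
  have "?S \<noteq> {}" using assms by (auto simp: in_set_conv_nth)
  moreover have "finite ?S" by simp
  ultimately have "Max ?S \<in> ?S" by (intro Max_in)
  then have "Max ?S - 1 < length u" by auto
  then have "(u @ [1]) ! (Max ?S - 1) = u ! (Max ?S - 1)" by (simp add: nth_append)
  then show ?thesis unfolding pz_def e Let_def by simp
qed

lemma pz_snoc0: "pz (u @ [0]) = (u = [] \<or> last u = 0)"
proof -
  let ?S = "{i. i < length (u @ [0]) \<and> (u @ [0]) ! i = 0}"
  have "Max ?S = length u"
    by (rule Max_eqI) (auto simp: nth_append)
  show ?thesis
  proof (cases "u = []")
    case True then show ?thesis using \<open>Max ?S = length u\<close> unfolding pz_def Let_def by simp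
  next
    case False
    then have "(u @ [0]) ! (length u - 1) = last u" "length u \<ge> 1"
      by (auto simp: nth_append last_conv_nth Suc_le_eq)
    then show ?thesis using False \<open>Max ?S = length u\<close> unfolding pz_def Let_def by simp
  qed
qed

lemma endzero_gf: "(\<Sum>v\<in>seqs01 a c. if v = [] \<or> last v = 0 then Q (maj01 v) else 0)
   = (if a = 0 \<and> c = 0 then 1 else 0) + (if 0 < c then Q a * qb a (c-1) else 0)"
proof -
  let ?G = "\<lambda>v::nat list. if v = [] \<or> last v = 0 then Q (maj01 v) else 0"
  have "(\<Sum>v\<in>seqs01 a c. ?G v) = (if a = 0 \<and> c = 0 then 1 else 0)
    + (if 0 < c then (\<Sum>u\<in>seqs01 a (c-1). Q (maj01 (u @ [0]))) else 0)"
    by (subst sum_seqs01) simp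
  also have "\<dots> = (if a = 0 \<and> c = 0 then 1 else 0) + (if 0 < c then Q a * qb a (c-1) else 0)"
    using maj_gf by simp
  finally show ?thesis .
qed

lemma pz_gf: "0 < b \<Longrightarrow> (\<Sum>u\<in>seqs01 a b. if pz u then Q (maj01 u) else 0) = qb a (b-1)"
proof (induction "a+b" arbitrary: a b)
  case 0 then show ?case by simp
next
  case (Suc N)
  let ?F = "\<lambda>u::nat list. if pz u then Q (maj01 u) else 0"
  have t1: "(if 0 < a then (\<Sum>u\<in>seqs01 (a-1) b. ?F (u @ [1])) else 0) = (if 0 < a then qb (a-1) (b-1) else 0)"
  proof (cases "0 < a")
    case True
    have "(\<Sum>u\<in>seqs01 (a-1) b. ?F (u @ [1])) = (\<Sum>u\<in>seqs01 (a-1) b. ?F u)"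
    proof (rule sum.cong[OF refl])
      fix u assume u: "u \<in> seqs01 (a-1) b"
      show "?F (u @ [1]) = ?F u"
        using pz_snoc1[OF seqs01_zero[OF u Suc.prems]] maj01_snoc1[OF seqs01_set[OF u]] by simp
    qed
    then show ?thesis using Suc True by simp
  qed simp
  have t2: "(\<Sum>u\<in>seqs01 a (b-1). ?F (u @ [0])) =
     (\<Sum>v\<in>seqs01 a (b-1). if v = [] \<or> last v = 0 then Q (maj01 v) else 0)"
  proof (rule sum.cong[OF refl])
    fix u :: "nat list"
    show "?F (u @ [0]) = (if u = [] \<or> last u = 0 then Q (maj01 u) else 0)"
      by (simp add: pz_snoc0 maj01_snoc)
  qed
  show ?case
    apply (subst sum_seqs01, subst qb_rec[of a "b-1"]) unfolding t1 t2 endzero_gf using Suc.prems by simp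
qed

lemma Kbar_maj: assumes "1 \<le> n" "m \<le> n"
  shows "(\<Sum>w\<in>Kbar m (n - m + 1). Q (maj01 w)) = Q m * qb m (n-m) + (if 0 < m then qb (m-1) (n-m) else 0)"
proof -
  let ?b = "n - m + 1"
  let ?F = "\<lambda>w::nat list. if last w = 1 \<longrightarrow> pz w then Q (maj01 w) else 0"
  have "(\<Sum>w\<in>Kbar m ?b. Q (maj01 w)) = (\<Sum>w\<in>seqs01 m ?b. ?F w)"
    unfolding Kbar_pz by (rule sum.inter_filter[OF seqs01_finite])
  also have "\<dots> = (if 0 < m then (\<Sum>u\<in>seqs01 (m-1) ?b. ?F (u @ [1])) else 0)
     + (\<Sum>u\<in>seqs01 m (n-m). ?F (u @ [0]))"
    by (subst sum_seqs01) simp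
  also have "(\<Sum>u\<in>seqs01 m (n-m). ?F (u @ [0])) = Q m * qb m (n-m)"
  proof -
    have "(\<Sum>u\<in>seqs01 m (n-m). ?F (u @ [0])) = (\<Sum>u\<in>seqs01 m (n-m). Q (maj01 (u @ [0])))"
      by (rule sum.cong[OF refl]) simp
    then show ?thesis using maj_gf by simp
  qed
  also have "(if 0 < m then (\<Sum>u\<in>seqs01 (m-1) ?b. ?F (u @ [1])) else 0) = (if 0 < m then qb (m-1) (n-m) else 0)"
  proof (cases "0 < m")
    case True
    have "(\<Sum>u\<in>seqs01 (m-1) ?b. ?F (u @ [1])) = (\<Sum>u\<in>seqs01 (m-1) ?b. if pz u then Q (maj01 u) else 0)"
    proof (rule sum.cong[OF refl])
      fix u assume u: "u \<in> seqs01 (m-1) ?b"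
      show "?F (u @ [1]) = (if pz u then Q (maj01 u) else 0)"
        using pz_snoc1[OF seqs01_zero[OF u]] maj01_snoc1[OF seqs01_set[OF u]] by simp
    qed
    also have "\<dots> = qb (m-1) (n-m)" by (subst pz_gf) simp_all
    finally show ?thesis using True by simp
  qed simp
  finally show ?thesis by (simp add: add.commute)
qed

theorem theorem1p1:
  fixes n m :: nat
  assumes "1 \<le> n" and "m \<le> n"
  shows "kaplansky_poly n m = (\<Sum>w\<in>Kset m (n - m + 1). monom 1 (inv01 w))
       \<and> kaplansky_poly n m = (\<Sum>w\<in>Kbar m (n - m + 1). monom 1 (maj01 w))"
  using kap_qb[OF assms] Kset_inv[OF assms] Kbar_maj[OF assms] by simp

end
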